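(* Let $\widehat{\Sigma}\in\mathbb{R}^{p\times p}$ with $\widehat{\Sigma}\succeq 0$, let $\theta_0\in\mathbb{R}^p$ with $s_0=\|\theta_0\|_0$, and let $\xi>0$. Let $\widehat{\theta}^{\mathrm{ZN}}=\widehat{\theta}^{\mathrm{ZN}}(\xi)$ be a minimizer of $$\theta\mapsto \frac{1}{2}\langle \theta-\theta_0,\widehat{\Sigma}(\theta-\theta_0)\rangle+\xi\|\theta\|_1$$ over $\theta\in\mathbb{R}^p$. Then $$\|\widehat{\theta}^{\mathrm{ZN}}\|_0\le\Big(1+\frac{4\|\widehat{\Sigma}\|_2}{\widehat{\kappa}(s_0,1)}\Big)s_0 .$$
   Context: $\|\cdot\|_0$ counts nonzero entries; $\|\widehat\Sigma\|_2$ is the spectral norm. The restricted eigenvalue constant is $\widehat{\kappa}(s,c_0)=\min_{J\subseteq[p],|J|\le s}\ \min_{u\in\mathbb{R}^p,\ \|u_{J^c}\|_1\le c_0\|u_J\|_1}\frac{\langle u,\widehat{\Sigma}u\rangle}{\|u\|_2^2}$, where $u_J$ is the restriction of $u$ to the indices in $J$. In the paper $\widehat\Sigma={\mathbf X}^{\sf T}{\mathbf X}/n$ for a design matrix ${\mathbf X}\in\mathbb{R}^{n\times p}$. *)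

theory Defs
  imports "HOL-Analysis.Analysis"
begin

definition l0norm :: "real^'p \<Rightarrow> nat" where
  "l0norm x = card {i. x $ i \<noteq> 0}"

definition l1norm :: "real^'p \<Rightarrow> real" where
  "l1norm x = (\<Sum>i\<in>UNIV. \<bar>x $ i\<bar>)"

definition restr :: "'p set \<Rightarrow> real^'p \<Rightarrow> real^'p" where
  "restr J u = (\<chi> i. if i \<in> J then u $ i else 0)"

text \<open>Spectral norm = operator norm of x \<mapsto> S x w.r.t. the Euclidean norm.\<close>
definition spec_norm :: "real^'p^'p \<Rightarrow> real" where
  "spec_norm S = onorm (\<lambda>x. S *v x)"

text \<open>Restricted eigenvalue constant; u = 0 excluded since the ratio is undefined there.\<close>
definition re_const :: "real^'p^'p \<Rightarrow> nat \<Rightarrow> real \<Rightarrow> real" where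
  "re_const S s c0 = Inf {(u \<bullet> (S *v u)) / (norm u)^2 | J u.
      card J \<le> s \<and> u \<noteq> 0 \<and> l1norm (restr (- J) u) \<le> c0 * l1norm (restr J u)}"

definition lasso_obj :: "real^'p^'p \<Rightarrow> real^'p \<Rightarrow> real \<Rightarrow> real^'p \<Rightarrow> real" where
  "lasso_obj S theta0 xi theta =
     (1/2) * ((theta - theta0) \<bullet> (S *v (theta - theta0))) + xi * l1norm theta"

end

theory Submission
  imports Defs
begin

lemma sym_inner:
  fixes S :: "real^'p^'p"
  assumes sym: "transpose S = S"
  shows "x \<bullet> (S *v y) = (S *v x) \<bullet> y"
proof -
  have "x \<bullet> adjoint (\<lambda>x. S *v x) y = (S *v x) \<bullet> y"
    by (rule adjoint_works) simp
  thus ?thesis by (simp add: adjoint_matrix sym)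
qed

lemma psd_cs:
  fixes S :: "real^'p^'p"
  assumes sym: "transpose S = S" and psd: "\<And>u. u \<bullet> (S *v u) \<ge> 0"
  shows "(x \<bullet> (S *v y))^2 \<le> (x \<bullet> (S *v x)) * (y \<bullet> (S *v y))"
proof -
  define a where "a = x \<bullet> (S *v x)"
  define b where "b = x \<bullet> (S *v y)"
  define c where "c = y \<bullet> (S *v y)"
  have yx: "y \<bullet> (S *v x) = b" unfolding b_def using sym_inner[OF sym, of y x]
    by (simp add: inner_commute)
  have q: "\<And>t. 0 \<le> a + 2*t*b + t^2 * c"
  proof -
    fix t :: real
    have "0 \<le> (x + t *\<^sub>R y) \<bullet> (S *v (x + t *\<^sub>R y))" by (rule psd)
    also have "\<dots> = a + 2*t*b + t^2 * c"
      by (simp add: a_def b_def c_def yx matrix_vector_right_distrib inner_add_left inner_add_right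
          matrix_vector_mult_scaleR algebra_simps power2_eq_square)
    finally show "0 \<le> a + 2*t*b + t^2 * c" .
  qed
  have c0: "c \<ge> 0" unfolding c_def by (rule psd)
  show ?thesis
  proof (cases "c = 0")
    case True
    have "b = 0"
    proof (rule ccontr)
      assume "b \<noteq> 0"
      have "0 \<le> a + 2*(-(a+1)/(2*b))*b" using q[of "-(a+1)/(2*b)"] True by simp
      with \<open>b \<noteq> 0\<close> show False by (simp add: field_simps)
    qed
    thus ?thesis using psd[of x] True by (simp add: b_def a_def c_def)
  next
    case False
    hence cp: "c > 0" using c0 by simp
    have "0 \<le> a + 2*(-b/c)*b + (-b/c)^2 * c" by (rule q)
    hence "0 \<le> a - b^2/c" using cp by (simp add: field_simps power2_eq_square)
    hence "b^2 \<le> a * c" using cp by (simp add: field_simps)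
    thus ?thesis by (simp add: a_def b_def c_def)
  qed
qed

lemma norm_Sv:
  fixes S :: "real^'p^'p"
  assumes sym: "transpose S = S" and psd: "\<And>u. u \<bullet> (S *v u) \<ge> 0"
  shows "(norm (S *v v))^2 \<le> spec_norm S * (v \<bullet> (S *v v))"
proof -
  define w where "w = S *v v"
  have bl: "norm (S *v x) \<le> spec_norm S * norm x" for x
    unfolding spec_norm_def using onorm[OF matrix_vector_mul_bounded_linear] by blast
  have "(norm w)^2 = v \<bullet> (S *v w)"
    unfolding w_def by (simp add: sym_inner[OF sym] dot_square_norm[symmetric])
  hence "((norm w)^2)^2 \<le> (v \<bullet> (S *v v)) * (w \<bullet> (S *v w))"
    using psd_cs[OF sym psd, of v w] by simp
  also have "w \<bullet> (S *v w) \<le> norm w * norm (S *v w)" by (rule norm_cauchy_schwarz)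
  hence "(v \<bullet> (S *v v)) * (w \<bullet> (S *v w)) \<le> (v \<bullet> (S *v v)) * (norm w * (spec_norm S * norm w))"
    using bl[of w] psd[of v] by (meson mult_left_mono norm_ge_zero order_trans mult_left_mono)
  finally have h: "((norm w)^2)^2 \<le> (norm w)^2 * (spec_norm S * (v \<bullet> (S *v v)))"
    by (simp add: algebra_simps power2_eq_square)
  show ?thesis
  proof (cases "norm w = 0")
    case True
    have "spec_norm S \<ge> 0" unfolding spec_norm_def
      by (rule onorm_pos_le[OF matrix_vector_mul_bounded_linear])
    thus ?thesis using True psd[of v] unfolding w_def by simp
  next
    case False
    hence "(norm w)^2 > 0" by simp
    have "(norm w)^2 * (norm w)^2 \<le> (norm w)^2 * (spec_norm S * (v \<bullet> (S *v v)))"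
      using h unfolding power2_eq_square[of "(norm w)^2"] .
    hence "(norm w)^2 \<le> spec_norm S * (v \<bullet> (S *v v))"
      using \<open>(norm w)^2 > 0\<close> by (rule mult_left_le_imp_le)
    thus ?thesis unfolding w_def .
  qed
qed



lemma kkt_real:
  fixes m d g xi :: real
  assumes m: "m \<noteq> 0" and d: "d \<ge> 0"
    and H: "\<And>t. 0 \<le> t*g + t^2*d/2 + xi*(\<bar>m+t\<bar> - \<bar>m\<bar>)"
  shows "g + xi * sgn m = 0"
proof (rule ccontr)
  define c where "c = g + xi * sgn m"
  assume "g + xi * sgn m \<noteq> 0"
  hence c0: "c \<noteq> 0" by (simp add: c_def)
  define D where "D = \<bar>c\<bar> + \<bar>m\<bar>*d + 1"
  have "\<bar>m\<bar>*d \<ge> 0" using d by simp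
  hence Dp: "D > 0" unfolding D_def by (smt (verit) abs_ge_zero)
  define t where "t = - c * \<bar>m\<bar> / D"
  have "\<bar>t\<bar> = \<bar>c\<bar> * \<bar>m\<bar> / D" using Dp by (simp add: t_def abs_mult abs_divide)
  also have "\<dots> < \<bar>m\<bar>"
  proof -
    have "\<bar>c\<bar> < D" using \<open>\<bar>m\<bar>*d \<ge> 0\<close> unfolding D_def by linarith
    hence "\<bar>c\<bar> * \<bar>m\<bar> < D * \<bar>m\<bar>" using m
      by (intro mult_strict_right_mono) auto
    thus ?thesis using Dp by (simp add: field_simps)
  qed
  finally have tl: "\<bar>t\<bar> < \<bar>m\<bar>" .
  have ab: "\<bar>m+t\<bar> - \<bar>m\<bar> = t * sgn m"
    using tl m by (cases "m > 0") (auto simp: abs_if sgn_if)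
  have "0 \<le> t*c + t^2*d/2" using H[of t] ab by (simp add: c_def algebra_simps)
  also have "t*c + t^2*d/2 = c^2*\<bar>m\<bar>/D * (\<bar>m\<bar>*d/(2*D) - 1)"
    using Dp by (simp add: t_def field_simps power2_eq_square)
  also have "\<dots> < 0"
  proof -
    have e2: "2*D = 2*\<bar>c\<bar> + 2*(\<bar>m\<bar>*d) + 2" unfolding D_def by simp
    have "\<bar>m\<bar>*d < 2*D" using e2 \<open>\<bar>m\<bar>*d \<ge> 0\<close> abs_ge_zero[of c] by linarith
    hence "\<bar>m\<bar>*d/(2*D) < 1" using Dp by simp
    moreover have "c^2*\<bar>m\<bar>/D > 0" using c0 m Dp by simp
    ultimately show ?thesis by (intro mult_pos_neg) auto
  qed
  finally show False by simp
qed

lemma l1_axis: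
  "l1norm (x + axis i t) = l1norm x + \<bar>x$i + t\<bar> - \<bar>x$i\<bar>"
proof -
  have e: "\<And>y::real^'a. l1norm y = \<bar>y$i\<bar> + (\<Sum>j\<in>UNIV-{i}. \<bar>y$j\<bar>)"
    unfolding l1norm_def by (simp add: sum.remove[of UNIV i])
  have "(\<Sum>j\<in>UNIV-{i}. \<bar>(x + axis i t)$j\<bar>) = (\<Sum>j\<in>UNIV-{i}. \<bar>x$j\<bar>)"
    by (rule sum.cong) (auto simp: axis_def)
  thus ?thesis by (simp add: e[of "x + axis i t"] e[of x])
qed

lemma quad_expand:
  fixes S :: "real^'p^'p"
  assumes sym: "transpose S = S"
  shows "(v + w) \<bullet> (S *v (v + w)) = v \<bullet> (S *v v) + 2*(w \<bullet> (S *v v)) + w \<bullet> (S *v w)"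
proof -
  have "v \<bullet> (S *v w) = w \<bullet> (S *v v)" using sym_inner[OF sym, of v w] by (simp add: inner_commute)
  thus ?thesis by (simp add: matrix_vector_right_distrib inner_add_left inner_add_right)
qed

lemma l1_restr: "l1norm (restr J u) = (\<Sum>i\<in>J. \<bar>u$i\<bar>)"
proof -
  have "l1norm (restr J u) = (\<Sum>i\<in>UNIV. if i \<in> J then \<bar>u$i\<bar> else 0)"
    unfolding l1norm_def restr_def by (intro sum.cong) auto
  thus ?thesis by (simp add: sum.inter_restrict[symmetric])
qed

lemma l1_split: "l1norm (x::real^'p) = (\<Sum>i\<in>J. \<bar>x$i\<bar>) + (\<Sum>i\<in>-J. \<bar>x$i\<bar>)"
proof -
  have "UNIV = J \<union> -J" by auto
  hence "l1norm x = (\<Sum>i\<in>J \<union> -J. \<bar>x$i\<bar>)" unfolding l1norm_def by simp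
  also have "\<dots> = (\<Sum>i\<in>J. \<bar>x$i\<bar>) + (\<Sum>i\<in>-J. \<bar>x$i\<bar>)"
    by (rule sum.union_disjoint) auto
  finally show ?thesis .
qed

lemma norm_sq_sum: "(norm (x::real^'p))^2 = (\<Sum>i\<in>UNIV. (x$i)^2)"
proof -
  have "(norm x)^2 = x \<bullet> x" by (simp add: dot_square_norm)
  also have "\<dots> = (\<Sum>i\<in>UNIV. (x$i)^2)" by (simp add: inner_vec_def power2_eq_square)
  finally show ?thesis .
qed

lemma partial_sq_le: "(\<Sum>i\<in>J. ((x::real^'p)$i)^2) \<le> (norm x)^2"
  unfolding norm_sq_sum by (rule sum_mono2) auto

theorem lemma2p1:
  fixes S :: "real^'p^'p" and theta0 thetaZN :: "real^'p" and xi :: real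
  assumes sym: "transpose S = S"
    and psd: "\<And>u. u \<bullet> (S *v u) \<ge> 0"
    and xi_pos: "xi > 0"
    and kappa_pos: "re_const S (l0norm theta0) 1 > 0"
    and minimizer: "\<And>theta. lasso_obj S theta0 xi thetaZN \<le> lasso_obj S theta0 xi theta"
  shows "real (l0norm thetaZN)
           \<le> (1 + 4 * spec_norm S / re_const S (l0norm theta0) 1) * real (l0norm theta0)"
proof -
  define v where "v = thetaZN - theta0"
  define q where "q = v \<bullet> (S *v v)"
  define S0 where "S0 = {i. theta0 $ i \<noteq> 0}"
  define s0 where "s0 = l0norm theta0"
  define k where "k = re_const S s0 1"
  define A where "A = (\<Sum>i\<in>S0. \<bar>v$i\<bar>)"
  define B where "B = (\<Sum>i\<in>-S0. \<bar>v$i\<bar>)"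
  have s0S0: "s0 = card S0" by (simp add: s0_def S0_def l0norm_def)
  have kp: "k > 0" using kappa_pos by (simp add: k_def s0_def)
  have q0: "q \<ge> 0" unfolding q_def by (rule psd)
  have A0: "A \<ge> 0" unfolding A_def by (simp add: sum_nonneg)
  have spec0: "spec_norm S \<ge> 0" unfolding spec_norm_def
    by (rule onorm_pos_le[OF matrix_vector_mul_bounded_linear])
  have kkt: "\<bar>(S *v v)$i\<bar> = xi" if nz: "thetaZN $ i \<noteq> 0" for i
  proof -
    define d where "d = axis i (1::real) \<bullet> (S *v axis i 1)"
    have d0: "d \<ge> 0" unfolding d_def by (rule psd)
    have "g + xi * sgn (thetaZN$i) = 0" if "g = (S *v v)$i" for g
    proof (rule kkt_real[OF nz d0])
      fix t :: real
      have ax: "axis i t = t *\<^sub>R axis i (1::real)"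
        by (simp add: axis_def vec_eq_iff)
      have "lasso_obj S theta0 xi thetaZN \<le> lasso_obj S theta0 xi (thetaZN + axis i t)"
        by (rule minimizer)
      moreover have "thetaZN + axis i t - theta0 = v + axis i t" by (simp add: v_def algebra_simps)
      moreover have "axis i t \<bullet> (S *v v) = t * g" using that by (simp add: inner_axis')
      moreover have "axis i t \<bullet> (S *v axis i t) = t^2 * d"
        by (simp add: ax d_def matrix_vector_mult_scaleR power2_eq_square)
      ultimately have "(1/2)*q + xi * l1norm thetaZN \<le>
          (1/2)*(q + 2*(t*g) + t^2*d) + xi * (l1norm thetaZN + \<bar>thetaZN$i + t\<bar> - \<bar>thetaZN$i\<bar>)"
        unfolding lasso_obj_def by (simp add: quad_expand[OF sym] l1_axis q_def v_def)
      thus "0 \<le> t*g + t^2*d/2 + xi*(\<bar>thetaZN$i+t\<bar> - \<bar>thetaZN$i\<bar>)"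
        by (simp add: algebra_simps)
    qed
    hence "(S *v v)$i = - xi * sgn (thetaZN$i)" by (simp add: algebra_simps)
    thus ?thesis using nz xi_pos by (simp add: abs_mult abs_sgn_eq)
  qed
  have basic: "(1/2)*q + xi * l1norm thetaZN \<le> xi * l1norm theta0"
    using minimizer[of theta0] unfolding lasso_obj_def by (simp add: q_def v_def)
  have l1diff: "l1norm theta0 - l1norm thetaZN \<le> A - B"
  proof -
    have "(\<Sum>i\<in>S0. \<bar>theta0$i\<bar>) - (\<Sum>i\<in>S0. \<bar>thetaZN$i\<bar>) \<le> A"
      unfolding A_def sum_subtractf[symmetric]
      by (rule sum_mono) (simp add: v_def abs_triangle_ineq3 abs_minus_commute)
    moreover have "(\<Sum>i\<in>-S0. \<bar>theta0$i\<bar>) = 0" by (simp add: S0_def)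
    moreover have "(\<Sum>i\<in>-S0. \<bar>thetaZN$i\<bar>) = B" unfolding B_def
      by (rule sum.cong) (auto simp: S0_def v_def)
    ultimately show ?thesis using l1_split[of theta0 S0] l1_split[of thetaZN S0] by simp
  qed
  have "xi*(l1norm theta0 - l1norm thetaZN) \<le> xi*(A-B)"
    using l1diff xi_pos by (intro mult_left_mono) auto
  hence qA: "q \<le> 2*xi*(A - B)" using basic by (simp add: algebra_simps)
  have "0 \<le> 2*xi*(A-B)" using qA q0 by linarith
  hence BA: "B \<le> A" using xi_pos by (simp add: zero_le_mult_iff)
  have B0: "B \<ge> 0" unfolding B_def by (simp add: sum_nonneg)
  have bx: "2*xi*B \<ge> 0" using xi_pos B0 by simp
  have e2: "2*xi*(A-B) = 2*xi*A - 2*xi*B" by (simp add: algebra_simps)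
  have qA2: "q \<le> 2*xi*A" using qA e2 bx by linarith
  have AA: "A^2 \<le> real s0 * (norm v)^2"
  proof -
    have "A^2 \<le> (\<Sum>i\<in>S0. \<bar>v$i\<bar>^2) * real (card S0)"
      unfolding A_def by (rule sum_squared_le_sum_of_squares)
    also have "\<dots> \<le> (norm v)^2 * real (card S0)"
      using partial_sq_le[where J=S0 and x=v] by (intro mult_right_mono) auto
    finally show ?thesis by (simp add: s0S0 mult.commute)
  qed
  have kv: "k * (norm v)^2 \<le> q"
  proof (cases "v = 0")
    case True thus ?thesis using q0 by simp
  next
    case False
    have mem: "q / (norm v)^2 \<in> {(u \<bullet> (S *v u)) / (norm u)^2 | J u.
      card J \<le> s0 \<and> u \<noteq> 0 \<and> l1norm (restr (- J) u) \<le> 1 * l1norm (restr J u)}"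
      using False BA by (auto simp: q_def s0S0 l1_restr A_def B_def intro!: exI[of _ S0])
    have bdd: "bdd_below {(u \<bullet> (S *v u)) / (norm u)^2 | J u.
      card J \<le> s0 \<and> u \<noteq> 0 \<and> l1norm (restr (- J) u) \<le> 1 * l1norm (restr J u)}"
      by (rule bdd_belowI[of _ 0]) (auto intro!: divide_nonneg_nonneg psd)
    have "k \<le> q / (norm v)^2" unfolding k_def re_const_def by (rule cInf_lower[OF mem bdd])
    thus ?thesis using False by (simp add: field_simps)
  qed
  have kq: "k * q \<le> 4 * xi^2 * real s0"
  proof (cases "q = 0")
    case True thus ?thesis by simp
  next
    case False
    hence qp: "q > 0" using q0 by simp
    have "q^2 \<le> (2*xi*A)^2" using qA2 q0 by (intro power_mono) auto
    also have "\<dots> = 4*xi^2*A^2" by (simp add: power_mult_distrib)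
    also have "\<dots> \<le> 4*xi^2*(real s0 * (norm v)^2)" using AA by (intro mult_left_mono) auto
    finally have "k * q^2 \<le> k * (4*xi^2*(real s0 * (norm v)^2))" using kp
      by (intro mult_left_mono) auto
    also have "\<dots> = 4*xi^2* real s0 * (k * (norm v)^2)" by (simp add: algebra_simps)
    also have "\<dots> \<le> 4*xi^2* real s0 * q" using kv by (intro mult_left_mono) auto
    finally have "(k*q) * q \<le> (4*xi^2*real s0) * q" by (simp add: power2_eq_square algebra_simps)
    thus ?thesis using qp by simp
  qed
  define T where "T = {i. thetaZN $ i \<noteq> 0}"
  have NT: "l0norm thetaZN = card T" by (simp add: T_def l0norm_def)
  have "(\<Sum>i\<in>T. ((S *v v)$i)^2) = (\<Sum>i\<in>T. xi^2)"
  proof (rule sum.cong)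
    fix i assume "i \<in> T"
    hence "\<bar>(S *v v)$i\<bar> = xi" using kkt by (simp add: T_def)
    thus "((S *v v)$i)^2 = xi^2" by (metis power2_abs)
  qed simp
  hence "real (card T) * xi^2 = (\<Sum>i\<in>T. ((S *v v)$i)^2)" by simp
  also have "\<dots> \<le> (norm (S *v v))^2" by (rule partial_sq_le)
  also have "\<dots> \<le> spec_norm S * q" unfolding q_def by (rule norm_Sv[OF sym psd])
  finally have Nq: "real (card T) * xi^2 \<le> spec_norm S * q" .
  have "k * (real (card T) * xi^2) \<le> spec_norm S * (k * q)" using Nq kp
    by (simp add: mult_left_mono algebra_simps)
  also have "\<dots> \<le> spec_norm S * (4 * xi^2 * real s0)" using kq spec0 by (rule mult_left_mono)
  finally have "(k * real (card T)) * xi^2 \<le> (4 * spec_norm S * real s0) * xi^2"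
    by (simp add: algebra_simps)
  hence "k * real (card T) \<le> 4 * spec_norm S * real s0" using xi_pos by simp
  hence "real (card T) \<le> 4 * spec_norm S * real s0 / k" using kp by (simp add: field_simps)
  also have "\<dots> \<le> (1 + 4 * spec_norm S / k) * real s0" by (simp add: algebra_simps)
  finally show ?thesis by (simp add: NT k_def s0_def)
qed

end
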